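(* Under the assumptions of the generalization setting below, for any $\epsilon>0$ and $\delta\in(0,1)$, if $$L\ge\frac{9n^2}{2\epsilon^2}\Big(\log\frac4\delta+\max\Big\{\log\mathcal N_{\infty,1}\big(\mathcal P,\tfrac\epsilon3\big),\log\mathcal N_{\infty,1}\big(\mathcal U,\tfrac\epsilon6\big)\Big\}\Big),$$ then with probability at least $1-\delta$, simultaneously for all $\omega\in\Omega$, $\big|\mathbb E[\sum_{i=1}^np_i^\omega(v,x,y)]-\frac1L\sum_{l=1}^L\sum_{i=1}^np_i^\omega(v^{(l)},x^{(l)},y^{(l)})\big|\le\epsilon$ and $\big|\mathbb E[\sum_{i=1}^nreg_i^\omega(v,x,y)]-\sum_{i=1}^n\widehat{reg}_i(\omega)\big|\le\epsilon$.
   Context: Generalization setting: $n$ bidders, $m$ items, bidder contexts $x\in\mathcal X^n$, item contexts $y\in\mathcal Y^m$, valuation/bid matrices $v\in\mathcal V^{n\times m}$, $\mathcal V\subseteq\mathbb R_{\ge0}$, with every bidder's valuation satisfying $\sum_{j\in S}v_{ij}\le1$ for all $S\subseteq[m]$; $(v_i',v_{-i})$ is $v$ with row $i$ replaced by $v_i'$. $\{(g^\omega,p^\omega):\omega\in\Omega\}$ is a family of mechanisms with $g^\omega_{ij}\in[0,1]$, $\sum_ig^\omega_{ij}\le1$, $p^\omega_i\ge0$, $p^\omega_i(b,x,y)\le\sum_jg^\omega_{ij}(b,x,y)b_{ij}$. Utility $u^\omega_i(v_i,b,x,y)=\sum_jg^\omega_{ij}(b,x,y)v_{ij}-p^\omega_i(b,x,y)$;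 ex-post regret $reg^\omega_i(v,x,y)=\max_{b_i'\in\mathcal V^m}u^\omega_i(v_i,(b_i',v_{-i}),x,y)-u^\omega_i(v_i,v,x,y)$; samples $(v^{(l)},x^{(l)},y^{(l)})$, $l=1,\dots,L$, i.i.d. from the law of $(v,x,y)$; $\widehat{reg}_i(\omega)=\frac1L\sum_l reg_i^\omega(v^{(l)},x^{(l)},y^{(l)})$. $\mathcal U=\{u^\omega\}$, $\mathcal P=\{p^\omega\}$; $l_{\infty,1}(p,p')=\sup_{(v,x,y)}\sum_i|p_i-p'_i|$, $l_{\infty,1}(u,u')=\sup_{(v,v',x,y)}\sum_i|u_i(v_i,(v_i',v_{-i}),x,y)-u'_i(v_i,(v_i',v_{-i}),x,y)|$; $\mathcal N_{\infty,1}(\mathcal F,r)$ is the minimum number of open $l_{\infty,1}$-balls of radius $r$ centered in $\mathcal F$ covering $\mathcal F$ (assumed finite). Maxima attained, functions measurable. *)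

theory Defs
  imports "HOL-Probability.Probability"
begin

text \<open>Bid / valuation matrices are functions nat => nat => real, indexed by
bidders i < n and items j < m; entries outside the index range are fixed to 0.\<close>

definition bid_profiles :: "nat \<Rightarrow> nat \<Rightarrow> real set \<Rightarrow> (nat \<Rightarrow> nat \<Rightarrow> real) set" where
  "bid_profiles n m Vs = {b. (\<forall>i<n. \<forall>j<m. b i j \<in> Vs) \<and> (\<forall>i j. \<not> (i < n \<and> j < m) \<longrightarrow> b i j = 0)}"

definition bid_rows :: "nat \<Rightarrow> real set \<Rightarrow> (nat \<Rightarrow> real) set" where
  "bid_rows m Vs = {r. (\<forall>j<m. r j \<in> Vs) \<and> (\<forall>j\<ge>m. r j = 0)}"

definition valuation_profiles :: "nat \<Rightarrow> nat \<Rightarrow> real set \<Rightarrow> (nat \<Rightarrow> nat \<Rightarrow> real) set" where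
  "valuation_profiles n m Vs = {v \<in> bid_profiles n m Vs. \<forall>i<n. \<forall>S\<subseteq>{..<m}. (\<Sum>j\<in>S. v i j) \<le> 1}"

definition ctx_vectors :: "nat \<Rightarrow> 'c set \<Rightarrow> (nat \<Rightarrow> 'c) set" where
  "ctx_vectors k Cs = {c. (\<forall>i<k. c i \<in> Cs) \<and> (\<forall>i\<ge>k. c i = undefined)}"

definition inst_dom :: "nat \<Rightarrow> nat \<Rightarrow> real set \<Rightarrow> 'a set \<Rightarrow> 'b set
    \<Rightarrow> ((nat \<Rightarrow> nat \<Rightarrow> real) \<times> (nat \<Rightarrow> 'a) \<times> (nat \<Rightarrow> 'b)) set" where
  "inst_dom n m Vs Xs Ys = valuation_profiles n m Vs \<times> ctx_vectors n Xs \<times> ctx_vectors m Ys"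

type_synonym ('a,'b) alloc = "(nat \<Rightarrow> nat \<Rightarrow> real) \<Rightarrow> (nat \<Rightarrow> 'a) \<Rightarrow> (nat \<Rightarrow> 'b) \<Rightarrow> nat \<Rightarrow> nat \<Rightarrow> real"
type_synonym ('a,'b) pay = "(nat \<Rightarrow> nat \<Rightarrow> real) \<Rightarrow> (nat \<Rightarrow> 'a) \<Rightarrow> (nat \<Rightarrow> 'b) \<Rightarrow> nat \<Rightarrow> real"
type_synonym ('a,'b) util = "nat \<Rightarrow> (nat \<Rightarrow> real) \<Rightarrow> (nat \<Rightarrow> nat \<Rightarrow> real) \<Rightarrow> (nat \<Rightarrow> 'a) \<Rightarrow> (nat \<Rightarrow> 'b) \<Rightarrow> real"

definition feasible_mech :: "nat \<Rightarrow> nat \<Rightarrow> real set \<Rightarrow> 'a set \<Rightarrow> 'b set \<Rightarrow> ('a,'b) alloc \<Rightarrow> ('a,'b) pay \<Rightarrow> bool" where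
  "feasible_mech n m Vs Xs Ys g p \<longleftrightarrow>
     (\<forall>b\<in>bid_profiles n m Vs. \<forall>x\<in>ctx_vectors n Xs. \<forall>y\<in>ctx_vectors m Ys.
        (\<forall>i<n. \<forall>j<m. 0 \<le> g b x y i j \<and> g b x y i j \<le> 1) \<and>
        (\<forall>j<m. (\<Sum>i<n. g b x y i j) \<le> 1) \<and>
        (\<forall>i<n. 0 \<le> p b x y i \<and> p b x y i \<le> (\<Sum>j<m. g b x y i j * b i j)))"

definition utility :: "nat \<Rightarrow> ('a,'b) alloc \<Rightarrow> ('a,'b) pay \<Rightarrow> ('a,'b) util" where
  "utility m g p i vi b x y = (\<Sum>j<m. g b x y i j * vi j) - p b x y i"

text \<open>Ex-post regret (maximum over deviating bids b_i' in V^m, written as a supremum;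
     attainment is a separate hypothesis of the theorem).\<close>
definition regret :: "nat \<Rightarrow> real set \<Rightarrow> ('a,'b) alloc \<Rightarrow> ('a,'b) pay \<Rightarrow> nat
     \<Rightarrow> (nat \<Rightarrow> nat \<Rightarrow> real) \<Rightarrow> (nat \<Rightarrow> 'a) \<Rightarrow> (nat \<Rightarrow> 'b) \<Rightarrow> real" where
  "regret m Vs g p i v x y =
     (SUP b'\<in>bid_rows m Vs. utility m g p i (v i) (v(i := b')) x y) - utility m g p i (v i) v x y"

text \<open>l_{infty,1} distances (as extended reals, since the supremum may be infinite).\<close>
definition linf1_pay :: "nat \<Rightarrow> nat \<Rightarrow> real set \<Rightarrow> 'a set \<Rightarrow> 'b set \<Rightarrow> ('a,'b) pay \<Rightarrow> ('a,'b) pay \<Rightarrow> ereal" where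
  "linf1_pay n m Vs Xs Ys p p' =
     (SUP z\<in>inst_dom n m Vs Xs Ys. ereal (\<Sum>i<n. \<bar>p (fst z) (fst (snd z)) (snd (snd z)) i
                                             - p' (fst z) (fst (snd z)) (snd (snd z)) i\<bar>))"

definition linf1_util :: "nat \<Rightarrow> nat \<Rightarrow> real set \<Rightarrow> 'a set \<Rightarrow> 'b set \<Rightarrow> ('a,'b) util \<Rightarrow> ('a,'b) util \<Rightarrow> ereal" where
  "linf1_util n m Vs Xs Ys u u' =
     (SUP z\<in>inst_dom n m Vs Xs Ys \<times> bid_profiles n m Vs.
        (case z of ((v, x, y), v') \<Rightarrow>
          ereal (\<Sum>i<n. \<bar>u i (v i) (v(i := v' i)) x y - u' i (v i) (v(i := v' i)) x y\<bar>)))"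

definition covering_number :: "('f \<Rightarrow> 'f \<Rightarrow> ereal) \<Rightarrow> 'f set \<Rightarrow> real \<Rightarrow> nat" where
  "covering_number d F r =
     (LEAST k. \<exists>C. C \<subseteq> F \<and> finite C \<and> card C = k \<and> (\<forall>f\<in>F. \<exists>c\<in>C. d f c < ereal r))"

definition finitely_coverable :: "('f \<Rightarrow> 'f \<Rightarrow> ereal) \<Rightarrow> 'f set \<Rightarrow> real \<Rightarrow> bool" where
  "finitely_coverable d F r \<longleftrightarrow> (\<exists>C. C \<subseteq> F \<and> finite C \<and> (\<forall>f\<in>F. \<exists>c\<in>C. d f c < ereal r))"

end

theory Submission
  imports Defs
begin

lemma hoeffding_PiM:
  fixes D :: "'z measure" and f :: "'z \<Rightarrow> real"
  assumes D: "prob_space D" and fm[measurable]: "f \<in> borel_measurable D"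
    and fb: "\<And>z. z \<in> space D \<Longrightarrow> f z \<in> {0..c}" and c: "c > 0" and L: "L > 0" and t: "t \<ge> 0"
  shows "measure (PiM {..<L} (\<lambda>_. D)) {S \<in> space (PiM {..<L} (\<lambda>_. D)).
            t \<le> \<bar>(\<Sum>l<L. f (S l)) / real L - (\<integral>z. f z \<partial>D)\<bar>} \<le> 2 * exp (-2 * real L * t\<^sup>2 / c\<^sup>2)"
proof -
  let ?Q = "PiM {..<L} (\<lambda>_. D)"
  interpret Q: prob_space ?Q by (rule prob_space_PiM) (use D in auto)
  have comp: "distr ?Q D (\<lambda>S. S l) = D" if "l < L" for l
    using distr_PiM_component[of "{..<L}" "\<lambda>_. D" l] D that by auto
  have ind0: "Q.indep_vars (\<lambda>_. D) (\<lambda>l S. S (min l (L - 1))) {..<L}"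
  proof (subst Q.indep_vars_iff_distr_eq_PiM)
    show "{..<L} \<noteq> {}" using L by auto
    show "(\<lambda>S. S (min i (L - 1))) \<in> measurable ?Q D" for i
    proof -
      have "min i (L - 1) \<in> {..<L}" using L by auto
      from measurable_component_singleton[OF this, of "\<lambda>_. D"] show ?thesis by simp
    qed
    have "distr ?Q ?Q (\<lambda>x. \<lambda>i\<in>{..<L}. x (min i (L - 1))) = distr ?Q ?Q (\<lambda>x. x)"
      by (rule distr_cong) (auto simp: space_PiM fun_eq_iff min_def PiE_def extensional_def)
    also have "\<dots> = ?Q" by simp
    also have "\<dots> = PiM {..<L} (\<lambda>i. distr ?Q D (\<lambda>S. S (min i (L - 1))))"
      by (rule PiM_cong) (auto simp: comp min_def)
    finally show "distr ?Q ?Q (\<lambda>x. \<lambda>i\<in>{..<L}. x (min i (L - 1))) = PiM {..<L} (\<lambda>i. distr ?Q D (\<lambda>S. S (min i (L - 1))))" .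
  qed
  have ind1: "Q.indep_vars (\<lambda>_. D) (\<lambda>l S. S l) {..<L}"
    using ind0 by (subst Q.indep_vars_cong[where Y="\<lambda>l S. S (min l (L - 1))" and J="{..<L}" and N'="\<lambda>_. D"]) 
       (auto simp: min_def fun_eq_iff)
  have ind: "Q.indep_vars (\<lambda>_. borel) (\<lambda>l S. f (S l)) {..<L}"
    by (rule Q.indep_vars_compose2[OF ind1]) simp
  have dX: "distr ?Q borel (\<lambda>S. f (S l)) = distr D borel f" if "l < L" for l
  proof -
    have "distr ?Q borel (\<lambda>S. f (S l)) = distr (distr ?Q D (\<lambda>S. S l)) borel f"
      using that by (subst distr_distr) (auto simp: comp_def)
    then show ?thesis using comp[OF that] by simp
  qed
  have E: "Q.expectation (\<lambda>S. f (S 0)) = (\<integral>z. f z \<partial>D)"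
  proof -
    have "(\<integral>z. f z \<partial>D) = (\<integral>z. f z \<partial>distr ?Q D (\<lambda>S. S 0))" using comp[of 0] L by simp
    also have "\<dots> = Q.expectation (\<lambda>S. f (S 0))"
      using L by (subst integral_distr) auto
    finally show ?thesis by simp
  qed
  interpret HI: Hoeffding_ineq_iid ?Q "{..<L}" "\<lambda>l S. f (S l)" "\<lambda>S. f (S 0)" 0 c "Q.expectation (\<lambda>S. f (S 0))"
  proof unfold_locales
    show "finite {..<L}" by simp
    show "Q.indep_vars (\<lambda>_. borel) (\<lambda>l S. f (S l)) {..<L}" by (rule ind)
    show "distr ?Q borel (\<lambda>S. f (S i)) = distr ?Q borel (\<lambda>S. f (S 0))" if "i \<in> {..<L}" for i
      using that L dX[of i] dX[of 0] by simp
    show "(\<lambda>S. f (S 0)) \<in> borel_measurable ?Q" using L by simp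
    show "AE x in ?Q. f (x 0) \<in> {0..c}"
      using L fb by (intro AE_I2) (auto simp: space_PiM)
  qed simp
  have "Q.prob {x \<in> space ?Q. t \<le> \<bar>(\<Sum>l<L. f (x l)) / real (card {..<L}) - Q.expectation (\<lambda>S. f (S 0))\<bar>}
        \<le> 2 * exp (- 2 * real (card {..<L}) * t\<^sup>2 / (c - 0)\<^sup>2)"
    by (rule HI.Hoeffding_ineq_abs_ge') (use t c L in auto)
  then show ?thesis using E by simp
qed

lemma core_bound:
  fixes D :: "'z measure" and h :: "'k \<Rightarrow> 'z \<Rightarrow> real"
  assumes D: "prob_space D" and K: "finite K" and hm: "\<And>k. k \<in> K \<Longrightarrow> h k \<in> borel_measurable D"
    and c: "c > 0" and L: "L > 0" and t: "t \<ge> 0"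
    and N: "N \<in> sets D" "emeasure D N = 0" and NDom: "\<And>z. z \<in> space D \<Longrightarrow> z \<notin> N \<Longrightarrow> z \<in> Dom"
    and hb: "\<And>k z. k \<in> K \<Longrightarrow> z \<in> Dom \<Longrightarrow> h k z \<in> {0..c}"
  shows "\<exists>B \<in> sets (PiM {..<L} (\<lambda>_. D)). measure (PiM {..<L} (\<lambda>_. D)) B \<le> real (card K) * (2 * exp (-2 * real L * t\<^sup>2 / c\<^sup>2)) \<and>
     (\<forall>S \<in> space (PiM {..<L} (\<lambda>_. D)) - B. (\<forall>l<L. S l \<in> Dom) \<and>
        (\<forall>k\<in>K. \<bar>(\<Sum>l<L. h k (S l)) / real L - (\<integral>z. h k z \<partial>D)\<bar> < t))"
proof -
  let ?Q = "PiM {..<L} (\<lambda>_. D)"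
  interpret Q: prob_space ?Q by (rule prob_space_PiM) (use D in auto)
  interpret D: prob_space D by (rule D)
  define cl where "cl k z = max 0 (min c (h k z))" for k z
  have clm[measurable]: "cl k \<in> borel_measurable D" if "k \<in> K" for k
    unfolding cl_def using hm[OF that] by measurable
  have clb: "cl k z \<in> {0..c}" for k z using c by (auto simp: cl_def)
  have cleq: "cl k z = h k z" if "k \<in> K" "z \<in> Dom" for k z
    using hb[OF that] by (auto simp: cl_def)
  have AEN: "AE z in D. z \<notin> N" using N by (intro AE_not_in) (auto simp: null_sets_def)
  have intcl: "(\<integral>z. cl k z \<partial>D) = (\<integral>z. h k z \<partial>D)" if "k \<in> K" for k
    using AEN by (intro integral_cong_AE) (auto simp: that hm cleq NDom)
  define Bk where "Bk k = {S \<in> space ?Q. t \<le> \<bar>(\<Sum>l<L. cl k (S l)) / real L - (\<integral>z. cl k z \<partial>D)\<bar>}" for k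
  define BN where "BN l = {S \<in> space ?Q. S l \<in> N}" for l
  have Bk_sets: "Bk k \<in> sets ?Q" if "k \<in> K" for k
  proof -
    have f: "(\<lambda>S. \<bar>(\<Sum>l<L. cl k (S l)) / real L - (\<integral>z. cl k z \<partial>D)\<bar>) \<in> borel_measurable ?Q"
    proof (intro borel_measurable_abs borel_measurable_diff borel_measurable_divide borel_measurable_sum measurable_const)
      fix l assume "l \<in> {..<L}"
      from measurable_component_singleton[OF this, of "\<lambda>_. D"]
      have "(\<lambda>S. S l) \<in> measurable ?Q D" by simp
      then show "(\<lambda>S. cl k (S l)) \<in> borel_measurable ?Q"
        using measurable_compose[OF _ clm[OF that]] by blast
    qed simp_all
    have "Bk k = f' -` {t..} \<inter> space ?Q" if "f' = (\<lambda>S. \<bar>(\<Sum>l<L. cl k (S l)) / real L - (\<integral>z. cl k z \<partial>D)\<bar>)" for f'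
      using that by (auto simp: Bk_def)
    then show ?thesis using measurable_sets[OF f, of "{t..}"] by auto
  qed
  have BN_sets: "BN l \<in> sets ?Q" if "l < L" for l
  proof -
    have "l \<in> {..<L}" using that by simp
    from measurable_component_singleton[OF this, of "\<lambda>_. D"]
    have "(\<lambda>S. S l) \<in> measurable ?Q D" by simp
    from measurable_sets[OF this N(1)] show ?thesis by (simp add: BN_def vimage_def Int_def conj_commute)
  qed
  have Bk_meas: "measure ?Q (Bk k) \<le> 2 * exp (-2 * real L * t\<^sup>2 / c\<^sup>2)" if "k \<in> K" for k
    unfolding Bk_def by (rule hoeffding_PiM[OF D clm[OF that] _ c L t]) (rule clb)
  have BN_meas: "measure ?Q (BN l) = 0" if "l < L" for l
  proof -
    have lI: "l \<in> {..<L}" using that by simp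
    have m: "(\<lambda>S. S l) \<in> measurable ?Q D"
      using measurable_component_singleton[OF lI, of "\<lambda>_. D"] by simp
    have "distr ?Q D (\<lambda>S. S l) = D"
      using distr_PiM_component[of "{..<L}" "\<lambda>_. D" l] D lI by blast
    then have "measure D N = measure ?Q ((\<lambda>S. S l) -` N \<inter> space ?Q)"
      using measure_distr[OF m N(1)] by simp
    moreover have "(\<lambda>S. S l) -` N \<inter> space ?Q = BN l" by (auto simp: BN_def)
    ultimately show ?thesis using N by (simp add: measure_def)
  qed
  define B where "B = (\<Union>k\<in>K. Bk k) \<union> (\<Union>l\<in>{..<L}. BN l)"
  have Bs: "B \<in> sets ?Q" unfolding B_def
    by (intro sets.Un sets.finite_UN K finite_lessThan) (auto intro: Bk_sets BN_sets)
  have m1: "measure ?Q B \<le> measure ?Q (\<Union>k\<in>K. Bk k) + measure ?Q (\<Union>l\<in>{..<L}. BN l)"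
    unfolding B_def by (rule measure_Un_le) (intro sets.finite_UN K finite_lessThan Bk_sets BN_sets; simp)+
  have m2: "measure ?Q (\<Union>k\<in>K. Bk k) \<le> (\<Sum>k\<in>K. measure ?Q (Bk k))"
    by (rule Q.finite_measure_subadditive_finite) (use Bk_sets K in blast)+
  have m3: "(\<Sum>k\<in>K. measure ?Q (Bk k)) \<le> (\<Sum>k\<in>K. 2 * exp (-2 * real L * t\<^sup>2 / c\<^sup>2))"
    by (rule sum_mono) (rule Bk_meas)
  have m4: "measure ?Q (\<Union>l\<in>{..<L}. BN l) \<le> (\<Sum>l\<in>{..<L}. measure ?Q (BN l))"
    by (rule Q.finite_measure_subadditive_finite) (use BN_sets in auto)
  have m5: "(\<Sum>l\<in>{..<L}. measure ?Q (BN l)) = 0" using BN_meas by simp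
  have Bm: "measure ?Q B \<le> real (card K) * (2 * exp (-2 * real L * t\<^sup>2 / c\<^sup>2))"
    using m1 m2 m3 m4 m5 by simp
  show ?thesis
  proof (intro bexI[OF _ Bs] conjI Bm ballI allI impI)
    fix S assume S: "S \<in> space ?Q - B"
    have Sl: "S l \<in> space D" if "l < L" for l using S that by (auto simp: space_PiM)
    show SD: "S l \<in> Dom" if "l < L" for l
      using S that Sl[OF that] NDom by (auto simp: B_def BN_def)
    fix k assume k: "k \<in> K"
    have "(\<Sum>l<L. cl k (S l)) = (\<Sum>l<L. h k (S l))"
      by (rule sum.cong) (auto simp: cleq k SD)
    then show "\<bar>(\<Sum>l<L. h k (S l)) / real L - (\<integral>z. h k z \<partial>D)\<bar> < t"
      using S k by (auto simp: B_def Bk_def intcl[OF k] not_le)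
  qed
qed

lemma exp_arith:
  fixes n NP k :: nat and L \<epsilon> \<delta> M :: real
  assumes n: "n > 0" and e: "\<epsilon> > 0" and d: "\<delta> > 0" and NP: "NP \<ge> 1" and k: "k \<le> NP"
    and LB: "L \<ge> 9 * real n ^ 2 / (2 * \<epsilon> ^ 2) * (ln (4 / \<delta>) + M)" and M: "M \<ge> ln (real NP)"
  shows "real k * (2 * exp (-2 * L * (\<epsilon>/3)\<^sup>2 / (real n)\<^sup>2)) \<le> \<delta> / 2"
proof -
  have pos: "9 * real n ^ 2 / (2 * \<epsilon> ^ 2) > 0" using n e by auto
  have "2 * L * (\<epsilon>/3)\<^sup>2 / (real n)\<^sup>2 = L / (9 * real n ^ 2 / (2 * \<epsilon> ^ 2))"
    using n e by (simp add: field_simps power2_eq_square)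
  also have "\<dots> \<ge> ln (4 / \<delta>) + M"
    using LB pos by (metis pos_le_divide_eq mult.commute)
  finally have X: "2 * L * (\<epsilon>/3)\<^sup>2 / (real n)\<^sup>2 \<ge> ln (4 / \<delta>) + ln (real NP)" using M by linarith
  have "ln (4 / \<delta>) + ln (real NP) = ln (4 * real NP / \<delta>)"
    using d NP by (simp add: ln_mult ln_div)
  with X have "exp (-2 * L * (\<epsilon>/3)\<^sup>2 / (real n)\<^sup>2) \<le> exp (- ln (4 * real NP / \<delta>))"
    by simp
  also have "\<dots> = \<delta> / (4 * real NP)" using d NP by (simp add: exp_minus)
  finally have E: "exp (-2 * L * (\<epsilon>/3)\<^sup>2 / (real n)\<^sup>2) \<le> \<delta> / (4 * real NP)" .
  have "real k * (2 * exp (-2 * L * (\<epsilon>/3)\<^sup>2 / (real n)\<^sup>2)) \<le> real NP * (2 * (\<delta> / (4 * real NP)))"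
    using E k by (intro mult_mono) auto
  also have "\<dots> = \<delta> / 2" using NP by simp
  finally show ?thesis .
qed

lemma approx_int:
  fixes f g :: "'z \<Rightarrow> real"
  assumes D: "prob_space D" and fm: "f \<in> borel_measurable D" and gm: "g \<in> borel_measurable D"
    and AE: "AE z in D. z \<in> Dom"
    and fb: "\<And>z. z \<in> Dom \<Longrightarrow> f z \<in> {0..c}" and gb: "\<And>z. z \<in> Dom \<Longrightarrow> g z \<in> {0..c}"
    and fg: "\<And>z. z \<in> Dom \<Longrightarrow> \<bar>f z - g z\<bar> \<le> r"
  shows "\<bar>(\<integral>z. f z \<partial>D) - (\<integral>z. g z \<partial>D)\<bar> \<le> r"
proof -
  interpret D: prob_space D by (rule D)
  have fi: "integrable D f"
    by (rule D.integrable_const_bound[where B=c]) (use AE fb fm in \<open>auto elim!: eventually_mono\<close>)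
  have gi: "integrable D g"
    by (rule D.integrable_const_bound[where B=c]) (use AE gb gm in \<open>auto elim!: eventually_mono\<close>)
  have fg': "f z \<le> g z + r" "g z \<le> f z + r" if "z \<in> Dom" for z
    using fg[OF that] by (simp_all add: abs_le_iff)
  have "(\<integral>z. f z \<partial>D) \<le> (\<integral>z. g z + r \<partial>D)"
    by (rule integral_mono_AE) (use fi gi AE fg' in \<open>auto elim!: eventually_mono\<close>)
  moreover have "(\<integral>z. g z \<partial>D) \<le> (\<integral>z. f z + r \<partial>D)"
    by (rule integral_mono_AE) (use fi gi AE fg' in \<open>auto elim!: eventually_mono\<close>)
  ultimately show ?thesis using fi gi D.prob_space by (auto simp: abs_le_iff)
qed

lemma avg_close:
  fixes a b :: "nat \<Rightarrow> real"
  assumes "L > 0" "\<And>l. l < L \<Longrightarrow> \<bar>a l - b l\<bar> \<le> r"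
  shows "\<bar>(\<Sum>l<L. a l) / real L - (\<Sum>l<L. b l) / real L\<bar> \<le> r"
proof -
  have "\<bar>(\<Sum>l<L. a l) - (\<Sum>l<L. b l)\<bar> = \<bar>\<Sum>l<L. a l - b l\<bar>" by (simp add: sum_subtractf)
  also have "\<dots> \<le> (\<Sum>l<L. \<bar>a l - b l\<bar>)" by (rule sum_abs)
  also have "\<dots> \<le> (\<Sum>l<L. r)" by (rule sum_mono) (use assms in auto)
  also have "\<dots> = real L * r" by simp
  finally have "\<bar>(\<Sum>l<L. a l) - (\<Sum>l<L. b l)\<bar> \<le> real L * r" .
  then show ?thesis using assms(1)
    by (simp add: diff_divide_distrib[symmetric] abs_divide pos_divide_le_eq mult.commute)
qed


lemma upd_bid_profile:
  assumes "v \<in> bid_profiles n m Vs" "i < n" "b \<in> bid_rows m Vs"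
  shows "v(i := b) \<in> bid_profiles n m Vs"
  using assms by (auto simp: bid_profiles_def bid_rows_def)

lemma row_bid_rows:
  assumes "v \<in> bid_profiles n m Vs" "i < n"
  shows "v i \<in> bid_rows m Vs"
  using assms by (auto simp: bid_profiles_def bid_rows_def)

lemma inst_domD:
  assumes "(v, x, y) \<in> inst_dom n m Vs Xs Ys"
  shows "v \<in> bid_profiles n m Vs" "x \<in> ctx_vectors n Xs" "y \<in> ctx_vectors m Ys"
    "\<And>i. i < n \<Longrightarrow> (\<Sum>j<m. v i j) \<le> 1"
  using assms by (auto simp: inst_dom_def valuation_profiles_def)

lemma val_nonneg:
  assumes "(v, x, y) \<in> inst_dom n m Vs Xs Ys" "Vs \<subseteq> {0..}" "i < n" "j < m"
  shows "0 \<le> v i j"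
  using assms by (auto simp: inst_dom_def valuation_profiles_def bid_profiles_def)

lemma pay_bounds:
  assumes F: "feasible_mech n m Vs Xs Ys g p" and V: "Vs \<subseteq> {0..}"
    and z: "(v, x, y) \<in> inst_dom n m Vs Xs Ys" and i: "i < n"
  shows "0 \<le> p v x y i" "p v x y i \<le> 1"
proof -
  note d = inst_domD[OF z]
  have f: "\<forall>j<m. 0 \<le> g v x y i j \<and> g v x y i j \<le> 1" "0 \<le> p v x y i" "p v x y i \<le> (\<Sum>j<m. g v x y i j * v i j)"
    using F d(1-3) i unfolding feasible_mech_def by blast+
  show "0 \<le> p v x y i" by (rule f(2))
  have "(\<Sum>j<m. g v x y i j * v i j) \<le> (\<Sum>j<m. v i j)"
    by (rule sum_mono) (use f(1) val_nonneg[OF z V i] in \<open>auto intro: mult_left_le_one_le\<close>)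
  then show "p v x y i \<le> 1" using f(3) d(4)[OF i] by linarith
qed

lemma util_upper:
  assumes F: "feasible_mech n m Vs Xs Ys g p" and V: "Vs \<subseteq> {0..}"
    and z: "(v, x, y) \<in> inst_dom n m Vs Xs Ys" and i: "i < n" and b: "b \<in> bid_profiles n m Vs"
  shows "utility m g p i (v i) b x y \<le> 1"
proof -
  note d = inst_domD[OF z]
  have f: "\<forall>j<m. 0 \<le> g b x y i j \<and> g b x y i j \<le> 1" "0 \<le> p b x y i"
    using F d(1-3) i b unfolding feasible_mech_def by blast+
  have "(\<Sum>j<m. g b x y i j * v i j) \<le> (\<Sum>j<m. v i j)"
    by (rule sum_mono) (use f(1) val_nonneg[OF z V i] in \<open>auto intro: mult_left_le_one_le\<close>)
  then show ?thesis using f(2) d(4)[OF i] by (simp add: utility_def)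
qed

lemma util_truth_nonneg:
  assumes F: "feasible_mech n m Vs Xs Ys g p"
    and z: "(v, x, y) \<in> inst_dom n m Vs Xs Ys" and i: "i < n"
  shows "0 \<le> utility m g p i (v i) v x y"
proof -
  note d = inst_domD[OF z]
  have "p v x y i \<le> (\<Sum>j<m. g v x y i j * v i j)"
    using F d(1-3) i unfolding feasible_mech_def by blast
  then show ?thesis by (simp add: utility_def)
qed

lemma sup_attained:
  fixes f :: "'x \<Rightarrow> real"
  assumes "b \<in> B" "\<And>b'. b' \<in> B \<Longrightarrow> f b' \<le> f b"
  shows "(SUP b'\<in>B. f b') = f b"
  using assms by (intro cSup_eq_maximum) auto

lemma regret_eq:
  assumes b: "b \<in> bid_rows m Vs"
    and mx: "\<forall>b'\<in>bid_rows m Vs. utility m g p i (v i) (v(i := b')) x y \<le> utility m g p i (v i) (v(i := b)) x y"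
  shows "regret m Vs g p i v x y = utility m g p i (v i) (v(i := b)) x y - utility m g p i (v i) v x y"
  unfolding regret_def using sup_attained[of b "bid_rows m Vs" "\<lambda>b'. utility m g p i (v i) (v(i := b')) x y"] b mx
  by simp

lemma regret_bounds:
  assumes F: "feasible_mech n m Vs Xs Ys g p" and V: "Vs \<subseteq> {0..}"
    and z: "(v, x, y) \<in> inst_dom n m Vs Xs Ys" and i: "i < n"
    and b: "b \<in> bid_rows m Vs"
    and mx: "\<forall>b'\<in>bid_rows m Vs. utility m g p i (v i) (v(i := b')) x y \<le> utility m g p i (v i) (v(i := b)) x y"
  shows "0 \<le> regret m Vs g p i v x y" "regret m Vs g p i v x y \<le> 1"
proof -
  note d = inst_domD[OF z]
  have r: "regret m Vs g p i v x y = utility m g p i (v i) (v(i := b)) x y - utility m g p i (v i) v x y"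
    by (rule regret_eq[OF b mx])
  have "utility m g p i (v i) (v(i := v i)) x y \<le> utility m g p i (v i) (v(i := b)) x y"
    using mx row_bid_rows[OF d(1) i] by blast
  then show "0 \<le> regret m Vs g p i v x y" using r by simp
  have "utility m g p i (v i) (v(i := b)) x y \<le> 1"
    by (rule util_upper[OF F V z i upd_bid_profile[OF d(1) i b]])
  then show "regret m Vs g p i v x y \<le> 1" using r util_truth_nonneg[OF F z i] by simp
qed


lemma sum_abs_diff_le:
  fixes a b :: "nat \<Rightarrow> real"
  shows "\<bar>(\<Sum>i<n. a i) - (\<Sum>i<n. b i)\<bar> \<le> (\<Sum>i<n. \<bar>a i - b i\<bar>)"
  by (metis (no_types) sum_abs sum_subtractf)

lemma linf_pay_bound:
  assumes d: "linf1_pay n m Vs Xs Ys p1 p2 < ereal r" and z: "(v, x, y) \<in> inst_dom n m Vs Xs Ys"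
  shows "\<bar>(\<Sum>i<n. p1 v x y i) - (\<Sum>i<n. p2 v x y i)\<bar> \<le> r"
proof -
  have "ereal (\<Sum>i<n. \<bar>p1 v x y i - p2 v x y i\<bar>) \<le> linf1_pay n m Vs Xs Ys p1 p2"
    unfolding linf1_pay_def using z by (intro SUP_upper2[of "(v, x, y)"]) auto
  from le_less_trans[OF this d] have "(\<Sum>i<n. \<bar>p1 v x y i - p2 v x y i\<bar>) \<le> r" by simp
  with sum_abs_diff_le show ?thesis by (rule order_trans)
qed

lemma linf_util_bound:
  assumes d: "linf1_util n m Vs Xs Ys u1 u2 < ereal r" and z: "(v, x, y) \<in> inst_dom n m Vs Xs Ys"
    and w: "w \<in> bid_profiles n m Vs"
  shows "(\<Sum>i<n. \<bar>u1 i (v i) (v(i := w i)) x y - u2 i (v i) (v(i := w i)) x y\<bar>) \<le> r"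
proof -
  have "ereal (\<Sum>i<n. \<bar>u1 i (v i) (v(i := w i)) x y - u2 i (v i) (v(i := w i)) x y\<bar>) \<le> linf1_util n m Vs Xs Ys u1 u2"
    unfolding linf1_util_def using z w by (intro SUP_upper2[of "((v, x, y), w)"]) auto
  from le_less_trans[OF this d] show ?thesis by simp
qed

lemma regret_close:
  assumes z: "(v, x, y) \<in> inst_dom n m Vs Xs Ys"
    and mx1: "\<forall>i<n. \<exists>b\<in>bid_rows m Vs. \<forall>b'\<in>bid_rows m Vs.
        utility m g1 p1 i (v i) (v(i := b')) x y \<le> utility m g1 p1 i (v i) (v(i := b)) x y"
    and mx2: "\<forall>i<n. \<exists>b\<in>bid_rows m Vs. \<forall>b'\<in>bid_rows m Vs.
        utility m g2 p2 i (v i) (v(i := b')) x y \<le> utility m g2 p2 i (v i) (v(i := b)) x y"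
    and lu: "linf1_util n m Vs Xs Ys (utility m g1 p1) (utility m g2 p2) < ereal r"
  shows "\<bar>(\<Sum>i<n. regret m Vs g1 p1 i v x y) - (\<Sum>i<n. regret m Vs g2 p2 i v x y)\<bar> \<le> 2 * r"
proof -
  define U1 where "U1 i b = utility m g1 p1 i (v i) (v(i := b)) x y" for i b
  define U2 where "U2 i b = utility m g2 p2 i (v i) (v(i := b)) x y" for i b
  note d = inst_domD[OF z]
  have "\<forall>i. \<exists>b. i < n \<longrightarrow> b \<in> bid_rows m Vs \<and> (\<forall>b'\<in>bid_rows m Vs. U1 i b' \<le> U1 i b)"
    using mx1 unfolding U1_def by metis
  then obtain B1 where B1: "\<And>i. i < n \<Longrightarrow> B1 i \<in> bid_rows m Vs \<and> (\<forall>b'\<in>bid_rows m Vs. U1 i b' \<le> U1 i (B1 i))"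
    by metis
  have "\<forall>i. \<exists>b. i < n \<longrightarrow> b \<in> bid_rows m Vs \<and> (\<forall>b'\<in>bid_rows m Vs. U2 i b' \<le> U2 i b)"
    using mx2 unfolding U2_def by metis
  then obtain B2 where B2: "\<And>i. i < n \<Longrightarrow> B2 i \<in> bid_rows m Vs \<and> (\<forall>b'\<in>bid_rows m Vs. U2 i b' \<le> U2 i (B2 i))"
    by metis
  define W where "W i = (if i < n then (if \<bar>U1 i (B1 i) - U2 i (B1 i)\<bar> \<ge> \<bar>U1 i (B2 i) - U2 i (B2 i)\<bar>
       then B1 i else B2 i) else (\<lambda>_. 0))" for i
  have Wr: "W i \<in> bid_rows m Vs" if "i < n" for i using B1 B2 that by (simp add: W_def)
  have Wp: "W \<in> bid_profiles n m Vs"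
    using Wr by (auto simp: bid_profiles_def bid_rows_def W_def)
  have r1: "regret m Vs g1 p1 i v x y = U1 i (B1 i) - U1 i (v i)" if "i < n" for i
    using regret_eq[of "B1 i" m Vs g1 p1 i v x y] B1[OF that] by (simp add: U1_def)
  have r2: "regret m Vs g2 p2 i v x y = U2 i (B2 i) - U2 i (v i)" if "i < n" for i
    using regret_eq[of "B2 i" m Vs g2 p2 i v x y] B2[OF that] by (simp add: U2_def)
  have per: "\<bar>regret m Vs g1 p1 i v x y - regret m Vs g2 p2 i v x y\<bar>
      \<le> \<bar>U1 i (W i) - U2 i (W i)\<bar> + \<bar>U1 i (v i) - U2 i (v i)\<bar>" if i: "i < n" for i
  proof -
    have a1: "U1 i (B2 i) \<le> U1 i (B1 i)" using B1[OF i] B2[OF i] by blast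
    have a2: "U2 i (B1 i) \<le> U2 i (B2 i)" using B1[OF i] B2[OF i] by blast
    have "\<bar>U1 i (B1 i) - U2 i (B2 i)\<bar> \<le> \<bar>U1 i (W i) - U2 i (W i)\<bar>"
      using a1 a2 i unfolding W_def by (auto simp: abs_le_iff)
    moreover have "\<bar>U1 i (v i) - U2 i (v i)\<bar> \<ge> U1 i (v i) - U2 i (v i)"
      "\<bar>U1 i (v i) - U2 i (v i)\<bar> \<ge> -(U1 i (v i) - U2 i (v i))" by auto
    ultimately show ?thesis using r1[OF i] r2[OF i] by (simp only: abs_le_iff) linarith
  qed
  have "\<bar>(\<Sum>i<n. regret m Vs g1 p1 i v x y) - (\<Sum>i<n. regret m Vs g2 p2 i v x y)\<bar>
      \<le> (\<Sum>i<n. \<bar>regret m Vs g1 p1 i v x y - regret m Vs g2 p2 i v x y\<bar>)"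
    by (rule sum_abs_diff_le)
  also have "\<dots> \<le> (\<Sum>i<n. \<bar>U1 i (W i) - U2 i (W i)\<bar> + \<bar>U1 i (v i) - U2 i (v i)\<bar>)"
    by (rule sum_mono) (use per in auto)
  also have "\<dots> = (\<Sum>i<n. \<bar>U1 i (W i) - U2 i (W i)\<bar>) + (\<Sum>i<n. \<bar>U1 i (v i) - U2 i (v i)\<bar>)"
    by (rule sum.distrib)
  also have "(\<Sum>i<n. \<bar>U1 i (W i) - U2 i (W i)\<bar>) \<le> r"
    using linf_util_bound[OF lu z Wp] by (simp add: U1_def U2_def)
  also have "(\<Sum>i<n. \<bar>U1 i (v i) - U2 i (v i)\<bar>) \<le> r"
    using linf_util_bound[OF lu z d(1)] by (simp add: U1_def U2_def)
  finally show ?thesis by simp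
qed

theorem corollary1:
  fixes n m L :: nat
    and Vs :: "real set" and Xs :: "'a set" and Ys :: "'b set"
    and Om :: "'w set"
    and G :: "'w \<Rightarrow> ('a,'b) alloc" and P :: "'w \<Rightarrow> ('a,'b) pay"
    and D :: "((nat \<Rightarrow> nat \<Rightarrow> real) \<times> (nat \<Rightarrow> 'a) \<times> (nat \<Rightarrow> 'b)) measure"
    and \<epsilon> \<delta> :: real
  assumes Vs_nonneg: "Vs \<subseteq> {0..}"
    and feas: "\<forall>\<omega>\<in>Om. feasible_mech n m Vs Xs Ys (G \<omega>) (P \<omega>)"
    and D_prob: "prob_space D"
    and D_supp: "AE z in D. z \<in> inst_dom n m Vs Xs Ys"
    and max_attained: "\<forall>\<omega>\<in>Om. \<forall>(v,x,y)\<in>inst_dom n m Vs Xs Ys. \<forall>i<n.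
          \<exists>b\<in>bid_rows m Vs. \<forall>b'\<in>bid_rows m Vs.
            utility m (G \<omega>) (P \<omega>) i (v i) (v(i := b')) x y \<le> utility m (G \<omega>) (P \<omega>) i (v i) (v(i := b)) x y"
    and meas_pay: "\<forall>\<omega>\<in>Om. (\<lambda>(v,x,y). \<Sum>i<n. P \<omega> v x y i) \<in> borel_measurable D"
    and meas_reg: "\<forall>\<omega>\<in>Om. (\<lambda>(v,x,y). \<Sum>i<n. regret m Vs (G \<omega>) (P \<omega>) i v x y) \<in> borel_measurable D"
    and cov_P: "finitely_coverable (linf1_pay n m Vs Xs Ys) (P ` Om) (\<epsilon>/3)"
    and cov_U: "finitely_coverable (linf1_util n m Vs Xs Ys) ((\<lambda>\<omega>. utility m (G \<omega>) (P \<omega>)) ` Om) (\<epsilon>/6)"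
    and eps_pos: "\<epsilon> > 0"
    and delta: "0 < \<delta>" "\<delta> < 1"
    and L_bound: "real L \<ge> 9 * real n ^ 2 / (2 * \<epsilon> ^ 2) *
        (ln (4 / \<delta>) + max (ln (real (covering_number (linf1_pay n m Vs Xs Ys) (P ` Om) (\<epsilon>/3))))
                             (ln (real (covering_number (linf1_util n m Vs Xs Ys)
                                        ((\<lambda>\<omega>. utility m (G \<omega>) (P \<omega>)) ` Om) (\<epsilon>/6)))))"
  shows "\<exists>A \<in> sets (PiM {..<L} (\<lambda>_. D)).
           measure (PiM {..<L} (\<lambda>_. D)) A \<ge> 1 - \<delta> \<and>
           (\<forall>S\<in>A. \<forall>\<omega>\<in>Om.
              \<bar>(\<integral>z. (case z of (v,x,y) \<Rightarrow> \<Sum>i<n. P \<omega> v x y i) \<partial>D)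
                - (1 / real L) * (\<Sum>l<L. case S l of (v,x,y) \<Rightarrow> \<Sum>i<n. P \<omega> v x y i)\<bar> \<le> \<epsilon> \<and>
              \<bar>(\<integral>z. (case z of (v,x,y) \<Rightarrow> \<Sum>i<n. regret m Vs (G \<omega>) (P \<omega>) i v x y) \<partial>D)
                - (\<Sum>i<n. (1 / real L) * (\<Sum>l<L. case S l of (v,x,y) \<Rightarrow> regret m Vs (G \<omega>) (P \<omega>) i v x y))\<bar> \<le> \<epsilon>)"
proof -
  let ?Q = "PiM {..<L} (\<lambda>_. D)"
  let ?Dom = "inst_dom n m Vs Xs Ys"
  interpret D: prob_space D by (rule D_prob)
  interpret Q: prob_space ?Q by (rule prob_space_PiM) (use D_prob in auto)
  define fp where "fp \<omega> = (\<lambda>z::((nat \<Rightarrow> nat \<Rightarrow> real) \<times> (nat \<Rightarrow> 'a) \<times> (nat \<Rightarrow> 'b)).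
     case z of (v,x,y) \<Rightarrow> \<Sum>i<n. P \<omega> v x y i)" for \<omega>
  define fr where "fr \<omega> = (\<lambda>z::((nat \<Rightarrow> nat \<Rightarrow> real) \<times> (nat \<Rightarrow> 'a) \<times> (nat \<Rightarrow> 'b)).
     case z of (v,x,y) \<Rightarrow> \<Sum>i<n. regret m Vs (G \<omega>) (P \<omega>) i v x y)" for \<omega>
  have conv1: "(1 / real L) * (\<Sum>l<L. case S l of (v,x,y) \<Rightarrow> \<Sum>i<n. P \<omega> v x y i) = (\<Sum>l<L. fp \<omega> (S l)) / real L"
    for S \<omega> by (simp add: fp_def)
  have conv2: "(\<Sum>i<n. (1 / real L) * (\<Sum>l<L. case S l of (v,x,y) \<Rightarrow> regret m Vs (G \<omega>) (P \<omega>) i v x y))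
      = (\<Sum>l<L. fr \<omega> (S l)) / real L" for S \<omega>
    by (simp add: fr_def split_beta sum_divide_distrib[symmetric] sum.swap[of _ "{..<n}"])
  have key: "\<exists>A \<in> sets ?Q. measure ?Q A \<ge> 1 - \<delta> \<and> (\<forall>S\<in>A. \<forall>\<omega>\<in>Om.
      \<bar>(\<integral>z. fp \<omega> z \<partial>D) - (\<Sum>l<L. fp \<omega> (S l)) / real L\<bar> \<le> \<epsilon> \<and>
      \<bar>(\<integral>z. fr \<omega> z \<partial>D) - (\<Sum>l<L. fr \<omega> (S l)) / real L\<bar> \<le> \<epsilon>)"
  proof (cases "Om = {} \<or> n = 0")
    case True
    show ?thesis
    proof (intro bexI[of _ "space ?Q"] conjI ballI)
      show "1 - \<delta> \<le> measure ?Q (space ?Q)" using delta Q.prob_space by simp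
      fix S \<omega> assume "\<omega> \<in> Om"
      then have n0: "n = 0" using True by auto
      have "fp \<omega> = (\<lambda>_. 0)" "fr \<omega> = (\<lambda>_. 0)" by (auto simp: fp_def fr_def n0 split_beta fun_eq_iff)
      then show "\<bar>(\<integral>z. fp \<omega> z \<partial>D) - (\<Sum>l<L. fp \<omega> (S l)) / real L\<bar> \<le> \<epsilon>"
        "\<bar>(\<integral>z. fr \<omega> z \<partial>D) - (\<Sum>l<L. fr \<omega> (S l)) / real L\<bar> \<le> \<epsilon>"
        using eps_pos by simp_all
    qed simp
  next
    case False
    then have Om: "Om \<noteq> {}" and n: "n > 0" by auto
    obtain N where N: "{z \<in> space D. z \<notin> ?Dom} \<subseteq> N" "emeasure D N = 0" "N \<in> sets D"
      using D_supp by (rule AE_E)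
    have NDom: "z \<in> ?Dom" if "z \<in> space D" "z \<notin> N" for z using N(1) that by auto
    have fp_b: "fp \<omega> z \<in> {0..real n}" if "\<omega> \<in> Om" "z \<in> ?Dom" for \<omega> z
    proof -
      obtain v x y where z: "z = (v, x, y)" by (cases z) auto
      have F: "feasible_mech n m Vs Xs Ys (G \<omega>) (P \<omega>)" using feas that by blast
      have "0 \<le> (\<Sum>i<n. P \<omega> v x y i)"
        by (rule sum_nonneg) (use pay_bounds[OF F Vs_nonneg] that z in auto)
      moreover have "(\<Sum>i<n. P \<omega> v x y i) \<le> of_nat (card {..<n}) * 1"
        by (rule sum_bounded_above) (use pay_bounds[OF F Vs_nonneg] that z in auto)
      ultimately show ?thesis by (simp add: fp_def z)
    qed
    have fr_b: "fr \<omega> z \<in> {0..real n}" if "\<omega> \<in> Om" "z \<in> ?Dom" for \<omega> z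
    proof -
      obtain v x y where z: "z = (v, x, y)" by (cases z) auto
      have F: "feasible_mech n m Vs Xs Ys (G \<omega>) (P \<omega>)" using feas that by blast
      have rb: "0 \<le> regret m Vs (G \<omega>) (P \<omega>) i v x y \<and> regret m Vs (G \<omega>) (P \<omega>) i v x y \<le> 1" if i: "i < n" for i
      proof -
        obtain b where b: "b \<in> bid_rows m Vs" "\<forall>b'\<in>bid_rows m Vs.
            utility m (G \<omega>) (P \<omega>) i (v i) (v(i := b')) x y \<le> utility m (G \<omega>) (P \<omega>) i (v i) (v(i := b)) x y"
          using max_attained \<open>\<omega> \<in> Om\<close> \<open>z \<in> ?Dom\<close> i unfolding z by fastforce
        have zd: "(v, x, y) \<in> ?Dom" using \<open>z \<in> ?Dom\<close> z by simp
        show ?thesis using regret_bounds[OF F Vs_nonneg zd i b] by auto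
      qed
      have "0 \<le> (\<Sum>i<n. regret m Vs (G \<omega>) (P \<omega>) i v x y)"
        by (rule sum_nonneg) (use rb in auto)
      moreover have "(\<Sum>i<n. regret m Vs (G \<omega>) (P \<omega>) i v x y) \<le> of_nat (card {..<n}) * 1"
        by (rule sum_bounded_above) (use rb in auto)
      ultimately show ?thesis by (simp add: fr_def z)
    qed
    have fp_m: "fp \<omega> \<in> borel_measurable D" if "\<omega> \<in> Om" for \<omega>
      using meas_pay that unfolding fp_def by (simp add: case_prod_beta')
    have fr_m: "fr \<omega> \<in> borel_measurable D" if "\<omega> \<in> Om" for \<omega>
      using meas_reg that unfolding fr_def by (simp add: case_prod_beta')
    let ?dP = "linf1_pay n m Vs Xs Ys" and ?dU = "linf1_util n m Vs Xs Ys"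
    let ?UF = "\<lambda>\<omega>. utility m (G \<omega>) (P \<omega>)"
    let ?NP = "covering_number ?dP (P ` Om) (\<epsilon>/3)"
    let ?NU = "covering_number ?dU (?UF ` Om) (\<epsilon>/6)"
    have "\<exists>C. C \<subseteq> P ` Om \<and> finite C \<and> card C = ?NP \<and> (\<forall>f\<in>P ` Om. \<exists>c\<in>C. ?dP f c < ereal (\<epsilon>/3))"
      unfolding covering_number_def by (rule LeastI_ex) (use cov_P in \<open>auto simp: finitely_coverable_def\<close>)
    then obtain CP where CP: "CP \<subseteq> P ` Om" "finite CP" "card CP = ?NP"
        "\<forall>f\<in>P ` Om. \<exists>c\<in>CP. ?dP f c < ereal (\<epsilon>/3)" by blast
    have "\<exists>C. C \<subseteq> ?UF ` Om \<and> finite C \<and> card C = ?NU \<and> (\<forall>f\<in>?UF ` Om. \<exists>c\<in>C. ?dU f c < ereal (\<epsilon>/6))"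
      unfolding covering_number_def by (rule LeastI_ex) (use cov_U in \<open>auto simp: finitely_coverable_def\<close>)
    then obtain CU where CU: "CU \<subseteq> ?UF ` Om" "finite CU" "card CU = ?NU"
        "\<forall>f\<in>?UF ` Om. \<exists>c\<in>CU. ?dU f c < ereal (\<epsilon>/6)" by blast
    define selP where "selP c = (SOME \<omega>. \<omega> \<in> Om \<and> P \<omega> = c)" for c
    define selU where "selU c = (SOME \<omega>. \<omega> \<in> Om \<and> ?UF \<omega> = c)" for c
    have selP: "selP c \<in> Om \<and> P (selP c) = c" if "c \<in> CP" for c
      unfolding selP_def by (rule someI_ex) (use CP(1) that in auto)
    have selU: "selU c \<in> Om \<and> ?UF (selU c) = c" if "c \<in> CU" for c
      unfolding selU_def by (rule someI_ex) (use CU(1) that in auto)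
    define WP where "WP = selP ` CP"
    define WU where "WU = selU ` CU"
    have WP1: "WP \<subseteq> Om" unfolding WP_def using selP by blast
    have WP2: "finite WP" unfolding WP_def using CP(2) by (rule finite_imageI)
    have WP3: "card WP \<le> ?NP" unfolding WP_def using card_image_le[OF CP(2), of selP] CP(3) by simp
    note WP = WP1 WP2 WP3
    have WU1: "WU \<subseteq> Om" unfolding WU_def using selU by blast
    have WU2: "finite WU" unfolding WU_def using CU(2) by (rule finite_imageI)
    have WU3: "card WU \<le> ?NU" unfolding WU_def using card_image_le[OF CU(2), of selU] CU(3) by simp
    note WU = WU1 WU2 WU3
    have WPcov: "\<exists>\<omega>'\<in>WP. ?dP (P \<omega>) (P \<omega>') < ereal (\<epsilon>/3)" if "\<omega> \<in> Om" for \<omega>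
    proof -
      have im: "P \<omega> \<in> P ` Om" using that by (rule imageI)
      obtain c where c: "c \<in> CP" "?dP (P \<omega>) c < ereal (\<epsilon>/3)" using bspec[OF CP(4) im] by (elim bexE)
      have mem: "selP c \<in> WP" unfolding WP_def using c(1) by (rule imageI)
      have eq: "P (selP c) = c" using selP[OF c(1)] by (elim conjE)
      have lt: "?dP (P \<omega>) (P (selP c)) < ereal (\<epsilon>/3)" unfolding eq by (rule c(2))
      show ?thesis using mem lt by (rule bexI[rotated])
    qed
    have WUcov: "\<exists>\<omega>'\<in>WU. ?dU (?UF \<omega>) (?UF \<omega>') < ereal (\<epsilon>/6)" if "\<omega> \<in> Om" for \<omega>
    proof -
      have im: "?UF \<omega> \<in> ?UF ` Om" using that by (rule imageI)
      obtain c where c: "c \<in> CU" "?dU (?UF \<omega>) c < ereal (\<epsilon>/6)" using bspec[OF CU(4) im] by (elim bexE)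
      have mem: "selU c \<in> WU" unfolding WU_def using c(1) by (rule imageI)
      have eq: "?UF (selU c) = c" using selU[OF c(1)] by (elim conjE)
      have lt: "?dU (?UF \<omega>) (?UF (selU c)) < ereal (\<epsilon>/6)" unfolding eq by (rule c(2))
      show ?thesis using mem lt by (rule bexI[rotated])
    qed
    obtain \<omega>0 where \<omega>0: "\<omega>0 \<in> Om" using Om by blast
    have NP1: "?NP \<ge> 1"
    proof -
      obtain c where "c \<in> CP" using CP(4) \<omega>0 by blast
      then show ?thesis using CP(2,3) by (metis One_nat_def Suc_leI card_gt_0_iff empty_iff)
    qed
    have NU1: "?NU \<ge> 1"
    proof -
      obtain c where "c \<in> CU" using CU(4) \<omega>0 by blast
      then show ?thesis using CU(2,3) by (metis One_nat_def Suc_leI card_gt_0_iff empty_iff)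
    qed
    define M where "M = max (ln (real ?NP)) (ln (real ?NU))"
    have MP: "M \<ge> ln (real ?NP)" and MU: "M \<ge> ln (real ?NU)" by (auto simp: M_def)
    have "ln (real ?NP) \<ge> 0" using NP1 by (intro ln_ge_zero) simp
    then have M0: "M \<ge> 0" using MP by linarith
    have LB: "real L \<ge> 9 * real n ^ 2 / (2 * \<epsilon> ^ 2) * (ln (4 / \<delta>) + M)"
      using L_bound unfolding M_def by simp
    have "ln (4 / \<delta>) > 0" using delta by simp
    then have "9 * real n ^ 2 / (2 * \<epsilon> ^ 2) * (ln (4 / \<delta>) + M) > 0"
      using n eps_pos M0 by (intro mult_pos_pos) auto
    then have Lpos: "L > 0" using LB by linarith
    have t0: "\<epsilon>/3 \<ge> 0" using eps_pos by simp
    have nr: "real n > 0" using n by simp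
    have Nnull: "emeasure D N = 0" by (rule N(2))
    have fpK_m: "fp k \<in> borel_measurable D" if "k \<in> WP" for k using fp_m WP(1) that by blast
    have fpK_b: "fp k z \<in> {0..real n}" if "k \<in> WP" "z \<in> ?Dom" for k z using fp_b WP(1) that by blast
    have frK_m: "fr k \<in> borel_measurable D" if "k \<in> WU" for k using fr_m WU(1) that by blast
    have frK_b: "fr k z \<in> {0..real n}" if "k \<in> WU" "z \<in> ?Dom" for k z using fr_b WU(1) that by blast
    have cbB1: "\<exists>B \<in> sets ?Q. measure ?Q B \<le> real (card WP) * (2 * exp (-2 * real L * (\<epsilon>/3)\<^sup>2 / (real n)\<^sup>2)) \<and>
       (\<forall>S \<in> space ?Q - B. (\<forall>l<L. S l \<in> ?Dom) \<and>
          (\<forall>k\<in>WP. \<bar>(\<Sum>l<L. fp k (S l)) / real L - (\<integral>z. fp k z \<partial>D)\<bar> < \<epsilon>/3))"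
      by (rule core_bound[where h=fp and Dom="?Dom" and K=WP])
        (rule D_prob, rule WP(2), erule fpK_m, rule nr, rule Lpos, rule t0, rule N(3), rule Nnull,
         erule (1) NDom, erule (1) fpK_b)
    obtain B1 where B1s: "B1 \<in> sets ?Q"
      and B1m: "measure ?Q B1 \<le> real (card WP) * (2 * exp (-2 * real L * (\<epsilon>/3)\<^sup>2 / (real n)\<^sup>2))"
      and B1p: "\<forall>S \<in> space ?Q - B1. (\<forall>l<L. S l \<in> ?Dom) \<and>
          (\<forall>k\<in>WP. \<bar>(\<Sum>l<L. fp k (S l)) / real L - (\<integral>z. fp k z \<partial>D)\<bar> < \<epsilon>/3)"
      using cbB1 by (elim bexE conjE) (rule that)
    have cbB2: "\<exists>B \<in> sets ?Q. measure ?Q B \<le> real (card WU) * (2 * exp (-2 * real L * (\<epsilon>/3)\<^sup>2 / (real n)\<^sup>2)) \<and>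
       (\<forall>S \<in> space ?Q - B. (\<forall>l<L. S l \<in> ?Dom) \<and>
          (\<forall>k\<in>WU. \<bar>(\<Sum>l<L. fr k (S l)) / real L - (\<integral>z. fr k z \<partial>D)\<bar> < \<epsilon>/3))"
      by (rule core_bound[where h=fr and Dom="?Dom" and K=WU])
        (rule D_prob, rule WU(2), erule frK_m, rule nr, rule Lpos, rule t0, rule N(3), rule Nnull,
         erule (1) NDom, erule (1) frK_b)
    obtain B2 where B2s: "B2 \<in> sets ?Q"
      and B2m: "measure ?Q B2 \<le> real (card WU) * (2 * exp (-2 * real L * (\<epsilon>/3)\<^sup>2 / (real n)\<^sup>2))"
      and B2p: "\<forall>S \<in> space ?Q - B2. (\<forall>l<L. S l \<in> ?Dom) \<and>
          (\<forall>k\<in>WU. \<bar>(\<Sum>l<L. fr k (S l)) / real L - (\<integral>z. fr k z \<partial>D)\<bar> < \<epsilon>/3)"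
      using cbB2 by (elim bexE conjE) (rule that)
    have e1: "real (card WP) * (2 * exp (-2 * real L * (\<epsilon>/3)\<^sup>2 / (real n)\<^sup>2)) \<le> \<delta> / 2"
      by (rule exp_arith[OF n eps_pos delta(1) NP1 WP(3) LB MP])
    have e2: "real (card WU) * (2 * exp (-2 * real L * (\<epsilon>/3)\<^sup>2 / (real n)\<^sup>2)) \<le> \<delta> / 2"
      by (rule exp_arith[OF n eps_pos delta(1) NU1 WU(3) LB MU])
    define A where "A = space ?Q - (B1 \<union> B2)"
    have As: "A \<in> sets ?Q" unfolding A_def using B1s B2s by blast
    have "measure ?Q A = 1 - measure ?Q (B1 \<union> B2)"
      unfolding A_def by (rule Q.prob_compl) (use B1s B2s in blast)
    moreover have "measure ?Q (B1 \<union> B2) \<le> measure ?Q B1 + measure ?Q B2"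
      by (rule measure_Un_le[OF B1s B2s])
    ultimately have Am: "measure ?Q A \<ge> 1 - \<delta>" using B1m B2m e1 e2 by linarith
    show ?thesis
    proof (intro bexI[OF _ As] conjI Am ballI)
      fix S \<omega> assume S: "S \<in> A" and \<omega>: "\<omega> \<in> Om"
      have S1: "S \<in> space ?Q - B1" and S2: "S \<in> space ?Q - B2" using S by (auto simp: A_def)
      have SD: "S l \<in> ?Dom" if "l < L" for l using B1p S1 that by blast
      obtain \<omega>' where \<omega>': "\<omega>' \<in> WP" "?dP (P \<omega>) (P \<omega>') < ereal (\<epsilon>/3)" using WPcov[OF \<omega>] by blast
      have \<omega>'O: "\<omega>' \<in> Om" using \<omega>' WP(1) by blast
      have cl: "\<bar>fp \<omega> z - fp \<omega>' z\<bar> \<le> \<epsilon>/3" if "z \<in> ?Dom" for z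
      proof -
        obtain v x y where z: "z = (v, x, y)" by (cases z) auto
        show ?thesis using linf_pay_bound[OF \<omega>'(2)] that by (simp add: z fp_def)
      qed
      have a1: "\<bar>(\<integral>z. fp \<omega> z \<partial>D) - (\<integral>z. fp \<omega>' z \<partial>D)\<bar> \<le> \<epsilon>/3"
        by (rule approx_int[OF D_prob fp_m[OF \<omega>] fp_m[OF \<omega>'O] D_supp fp_b[OF \<omega>] fp_b[OF \<omega>'O] cl])
      have a2: "\<bar>(\<Sum>l<L. fp \<omega>' (S l)) / real L - (\<integral>z. fp \<omega>' z \<partial>D)\<bar> < \<epsilon>/3"
        using B1p S1 \<omega>'(1) by blast
      have a3: "\<bar>(\<Sum>l<L. fp \<omega> (S l)) / real L - (\<Sum>l<L. fp \<omega>' (S l)) / real L\<bar> \<le> \<epsilon>/3"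
        by (rule avg_close[OF Lpos]) (use cl SD in blast)
      show "\<bar>(\<integral>z. fp \<omega> z \<partial>D) - (\<Sum>l<L. fp \<omega> (S l)) / real L\<bar> \<le> \<epsilon>"
        using a1 a2 a3 unfolding abs_le_iff abs_less_iff by linarith
      obtain \<omega>'' where \<omega>'': "\<omega>'' \<in> WU" "?dU (?UF \<omega>) (?UF \<omega>'') < ereal (\<epsilon>/6)" using WUcov[OF \<omega>] by blast
      have \<omega>''O: "\<omega>'' \<in> Om" using \<omega>'' WU(1) by blast
      have cr: "\<bar>fr \<omega> z - fr \<omega>'' z\<bar> \<le> \<epsilon>/3" if "z \<in> ?Dom" for z
      proof -
        obtain v x y where z: "z = (v, x, y)" by (cases z) auto
        have zd: "(v, x, y) \<in> ?Dom" using that z by simp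
        have "\<bar>(\<Sum>i<n. regret m Vs (G \<omega>) (P \<omega>) i v x y) - (\<Sum>i<n. regret m Vs (G \<omega>'') (P \<omega>'') i v x y)\<bar> \<le> 2 * (\<epsilon>/6)"
          by (rule regret_close[OF zd _ _ \<omega>''(2)]) (use max_attained \<omega> \<omega>''O zd in fast)+
        then show ?thesis by (simp add: z fr_def)
      qed
      have b1: "\<bar>(\<integral>z. fr \<omega> z \<partial>D) - (\<integral>z. fr \<omega>'' z \<partial>D)\<bar> \<le> \<epsilon>/3"
        by (rule approx_int[OF D_prob fr_m[OF \<omega>] fr_m[OF \<omega>''O] D_supp fr_b[OF \<omega>] fr_b[OF \<omega>''O] cr])
      have b2: "\<bar>(\<Sum>l<L. fr \<omega>'' (S l)) / real L - (\<integral>z. fr \<omega>'' z \<partial>D)\<bar> < \<epsilon>/3"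
        using B2p S2 \<omega>''(1) by blast
      have b3: "\<bar>(\<Sum>l<L. fr \<omega> (S l)) / real L - (\<Sum>l<L. fr \<omega>'' (S l)) / real L\<bar> \<le> \<epsilon>/3"
        by (rule avg_close[OF Lpos]) (use cr SD in blast)
      show "\<bar>(\<integral>z. fr \<omega> z \<partial>D) - (\<Sum>l<L. fr \<omega> (S l)) / real L\<bar> \<le> \<epsilon>"
        using b1 b2 b3 unfolding abs_le_iff abs_less_iff by linarith
    qed
  qed
  then show ?thesis
    unfolding conv1 conv2 by (simp add: fp_def fr_def)
qed

end
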